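(* Let $u\in\mathcal{L}PSH^*(\mathbb{C}^n)$ be toric with $c_\infty(u)<1$. Then $\mathcal{P}_\infty(u)$ is monomial, i.e. there exist finitely many monomials $z^J\in\mathcal{P}_\infty(u)$ such that every $P\in\mathcal{P}_\infty(u)$ is a $\mathbb{C}$-linear combination of them.
   Context: $\mathcal{L}PSH^*(\mathbb{C}^n)$: plurisubharmonic $u$ on $\mathbb{C}^n$ with $\limsup_{|z|\to\infty}u(z)/\log|z|<\infty$ and $u(z)\to+\infty$ as $|z|\to\infty$. Toric: $u(z)=u(|z_1|,\ldots,|z_n|)$. $g\in L^2(\infty)$ means $\int_{\mathbb{C}^n\setminus K}|g|^2d\lambda<\infty$ for some compact $K$; $c_\infty(u)=\inf\{c>0:e^{-cu}\in L^2(\infty)\}$; $\mathcal{P}_\infty(u)$ is the vector space of polynomials $P$ with $|P|e^{-u}\in L^2(\infty)$. *)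

theory Defs
  imports "HOL-Analysis.Analysis"
begin

definition usc :: "('a::topological_space \<Rightarrow> ereal) \<Rightarrow> bool" where
  "usc f \<longleftrightarrow> (\<forall>a::real. open {x. f x < ereal a})"

definition circle_mean :: "(complex \<Rightarrow> ereal) \<Rightarrow> complex \<Rightarrow> real \<Rightarrow> ereal" where
  "circle_mean v z r =
     (enn2ereal (\<integral>\<^sup>+ t\<in>{0..2*pi}. e2ennreal (v (z + of_real r * cis t)) \<partial>lborel)
      - enn2ereal (\<integral>\<^sup>+ t\<in>{0..2*pi}. e2ennreal (- v (z + of_real r * cis t)) \<partial>lborel))
     / ereal (2*pi)"

definition subharmonic :: "(complex \<Rightarrow> ereal) \<Rightarrow> bool" where
  "subharmonic v \<longleftrightarrow> usc v \<and> (\<forall>z r. r > 0 \<longrightarrow> v z \<le> circle_mean v z r)"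

definition psh :: "(complex^'n \<Rightarrow> ereal) \<Rightarrow> bool" where
  "psh u \<longleftrightarrow> usc u \<and> (\<forall>a b. subharmonic (\<lambda>w. u (a + w *s b)))"

definition LPSH_star :: "(complex^'n \<Rightarrow> ereal) \<Rightarrow> bool" where
  "LPSH_star u \<longleftrightarrow> psh u
     \<and> Limsup at_infinity (\<lambda>z. u z / ereal (ln (norm z))) < \<infinity>
     \<and> (u \<longlongrightarrow> \<infinity>) at_infinity"

definition toric :: "(complex^'n \<Rightarrow> ereal) \<Rightarrow> bool" where
  "toric u \<longleftrightarrow> (\<forall>z w. (\<forall>i. norm (z$i) = norm (w$i)) \<longrightarrow> u z = u w)"

definition eexp :: "ereal \<Rightarrow> ennreal" where
  "eexp x = (case x of ereal r \<Rightarrow> ennreal (exp r) | PInfty \<Rightarrow> \<infinity> | MInfty \<Rightarrow> 0)"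

definition L2_infty :: "(complex^'n \<Rightarrow> ennreal) \<Rightarrow> bool" where
  "L2_infty g \<longleftrightarrow> (\<exists>K. compact K \<and> (\<integral>\<^sup>+ z\<in>(UNIV - K). (g z)^2 \<partial>lborel) < \<infinity>)"

definition c_infty :: "(complex^'n \<Rightarrow> ereal) \<Rightarrow> ereal" where
  "c_infty u = Inf {ereal c | c. c > 0 \<and> L2_infty (\<lambda>z. eexp (- (ereal c * u z)))}"

definition monomial :: "('n::finite \<Rightarrow> nat) \<Rightarrow> complex^'n \<Rightarrow> complex" where
  "monomial J z = (\<Prod>i\<in>UNIV. (z$i) ^ J i)"

definition polynomial_fun :: "(complex^'n::finite \<Rightarrow> complex) \<Rightarrow> bool" where
  "polynomial_fun P \<longleftrightarrow> (\<exists>S c. finite S \<and> (\<forall>z. P z = (\<Sum>J\<in>S. c J * monomial J z)))"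

definition P_infty :: "(complex^'n::finite \<Rightarrow> ereal) \<Rightarrow> (complex^'n \<Rightarrow> complex) set" where
  "P_infty u = {P. polynomial_fun P \<and> L2_infty (\<lambda>z. ennreal (norm (P z)) * eexp (- u z))}"

end

theory Submission
  imports Defs
begin

lemma shear_inv:
  fixes F :: "'a::euclidean_space \<Rightarrow> ennreal"
  assumes F[measurable]: "F \<in> borel_measurable borel"
    and b1: "b1 \<in> Basis" and b2: "b2 \<in> Basis" and ne: "b1 \<noteq> b2"
  shows "(\<integral>\<^sup>+z. F (z + (t * (z \<bullet> b2)) *\<^sub>R b1) \<partial>lborel) = (\<integral>\<^sup>+z. F z \<partial>lborel)"
proof -
  interpret product_sigma_finite "\<lambda>_. lborel :: real measure"
    by standard
  define I where "I = (Basis::'a set) - {b1}"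
  have BI: "(Basis::'a set) = insert b1 I" "finite I" "b1 \<notin> I" "b2 \<in> I"
    using b1 b2 ne by (auto simp: I_def)
  define \<Phi> where "\<Phi> = (\<lambda>f. \<Sum>b\<in>(Basis::'a set). f b *\<^sub>R b)"
  have \<Phi>m[measurable]: "\<Phi> \<in> borel_measurable (\<Pi>\<^sub>M b\<in>Basis. lborel)"
    unfolding \<Phi>_def by measurable
  have inn: "\<Phi> f \<bullet> b2 = f b2" for f
    unfolding \<Phi>_def using b2
    by (simp add: inner_sum_left inner_Basis if_distrib sum.delta cong: if_cong)
  have eq1: "\<Phi> (x(b1 := y)) = (\<Sum>b\<in>I. x b *\<^sub>R b) + y *\<^sub>R b1" for x y
  proof -
    have "\<Phi> (x(b1 := y)) = (x(b1 := y)) b1 *\<^sub>R b1 + (\<Sum>b\<in>I. (x(b1 := y)) b *\<^sub>R b)"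
      unfolding \<Phi>_def I_def by (rule sum.remove[OF finite_Basis b1])
    also have "(\<Sum>b\<in>I. (x(b1 := y)) b *\<^sub>R b) = (\<Sum>b\<in>I. x b *\<^sub>R b)"
      by (rule sum.cong) (auto simp: I_def)
    finally show ?thesis by (simp only: add.commute fun_upd_same)
  qed
  have "(\<integral>\<^sup>+z. F (z + (t * (z \<bullet> b2)) *\<^sub>R b1) \<partial>lborel)
      = (\<integral>\<^sup>+f. F (\<Phi> f + (t * (\<Phi> f \<bullet> b2)) *\<^sub>R b1) \<partial>(\<Pi>\<^sub>M b\<in>Basis. lborel))"
    by (subst lborel_eq) (simp add: nn_integral_distr \<Phi>_def)
  also have "\<dots> = (\<integral>\<^sup>+x. (\<integral>\<^sup>+y. F (\<Phi> (x(b1:=y)) + (t * (\<Phi> (x(b1:=y)) \<bullet> b2)) *\<^sub>R b1) \<partial>lborel) \<partial>(\<Pi>\<^sub>M b\<in>I. lborel))"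
    unfolding BI(1) by (rule product_nn_integral_insert) (use BI in auto)
  also have "\<dots> = (\<integral>\<^sup>+x. (\<integral>\<^sup>+y. F ((\<Sum>b\<in>I. x b *\<^sub>R b) + (y + t * x b2) *\<^sub>R b1) \<partial>lborel) \<partial>(\<Pi>\<^sub>M b\<in>I. lborel))"
    using ne by (simp only: inn) (simp only: eq1 fun_upd_apply, simp add: algebra_simps)
  also have "\<dots> = (\<integral>\<^sup>+x. (\<integral>\<^sup>+y. F ((\<Sum>b\<in>I. x b *\<^sub>R b) + y *\<^sub>R b1) \<partial>lborel) \<partial>(\<Pi>\<^sub>M b\<in>I. lborel))"
  proof (rule nn_integral_cong)
    fix x
    show "(\<integral>\<^sup>+y. F ((\<Sum>b\<in>I. x b *\<^sub>R b) + (y + t * x b2) *\<^sub>R b1) \<partial>lborel) = (\<integral>\<^sup>+y. F ((\<Sum>b\<in>I. x b *\<^sub>R b) + y *\<^sub>R b1) \<partial>lborel)"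
      using nn_integral_real_affine[of "\<lambda>y. F ((\<Sum>b\<in>I. x b *\<^sub>R b) + y *\<^sub>R b1)" 1 "t * x b2"]
      by (simp add: add.commute)
  qed
  also have "\<dots> = (\<integral>\<^sup>+x. (\<integral>\<^sup>+y. F (\<Phi> (x(b1:=y))) \<partial>lborel) \<partial>(\<Pi>\<^sub>M b\<in>I. lborel))"
    by (simp add: eq1)
  also have "\<dots> = (\<integral>\<^sup>+f. F (\<Phi> f) \<partial>(\<Pi>\<^sub>M b\<in>Basis. lborel))"
    unfolding BI(1) by (rule product_nn_integral_insert[symmetric]) (use BI in auto)
  also have "\<dots> = (\<integral>\<^sup>+z. F z \<partial>lborel)"
    by (subst (2) lborel_eq) (simp add: nn_integral_distr \<Phi>_def)
  finally show ?thesis .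
qed

definition Dv :: "('n \<Rightarrow> complex) \<Rightarrow> complex^'n \<Rightarrow> complex^'n" where
  "Dv v z = (\<chi> j. v j * z$j)"

lemma Dv_measurable[measurable]: "Dv v \<in> borel_measurable borel"
  unfolding Dv_def by (intro borel_measurable_continuous_onI continuous_intros)

lemma shear_meas[measurable]: "(\<lambda>z::'a::euclidean_space. z + (a * (z \<bullet> c)) *\<^sub>R d) \<in> borel_measurable borel"
  by (intro borel_measurable_continuous_onI continuous_intros)

lemma rot_inv0:
  fixes f :: "complex^'n \<Rightarrow> ennreal"
  assumes f[measurable]: "f \<in> borel_measurable borel" and w: "cmod w = 1" and im: "Im w \<noteq> 0"
  shows "(\<integral>\<^sup>+z. f (Dv (\<lambda>j. if j = i then w else 1) z) \<partial>lborel) = (\<integral>\<^sup>+z. f z \<partial>lborel)"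
proof -
  define a where "a = (Re w - 1) / Im w"
  define b where "b = Im w"
  define X where "X = (\<lambda>z::complex^'n. z + (a * (z \<bullet> axis i \<i>)) *\<^sub>R axis i 1)"
  define Y where "Y = (\<lambda>z::complex^'n. z + (b * (z \<bullet> axis i 1)) *\<^sub>R axis i \<i>)"
  have [measurable]: "X \<in> borel_measurable borel" "Y \<in> borel_measurable borel"
    unfolding X_def Y_def by measurable
  have B: "axis i 1 \<in> (Basis :: (complex^'n) set)" "axis i \<i> \<in> (Basis :: (complex^'n) set)"
    "axis i 1 \<noteq> (axis i \<i> :: complex^'n)"
    by (auto simp: Basis_vec_def axis_eq_axis)
  have w2: "(Re w)^2 + (Im w)^2 = 1"
    using w by (simp add: cmod_def)
  have as: "a * Im w = Re w - 1" using im by (simp add: a_def)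
  have ac: "a * (Re w + 1) = - Im w"
  proof -
    have "a * (Re w + 1) * Im w = (a * Im w) * (Re w + 1)" by (simp only: mult_ac)
    also have "\<dots> = (Re w - 1) * (Re w + 1)" by (simp only: as)
    also have "\<dots> = - Im w * Im w" using w2 by (simp add: algebra_simps power2_eq_square)
    finally have "a * (Re w + 1) * Im w = (- Im w) * Im w" by simp
    then show ?thesis using im by (simp only: mult_cancel_right) simp
  qed
  have ab: "a * b = Re w - 1" using as by (simp add: b_def)
  have r1: "x + a*y + a*(y + b*(x + a*y)) = Re w * x - Im w * y" for x y
  proof -
    have "x + a*y + a*(y + b*(x + a*y)) = x + (a*b)*x + a*y*(2 + a*b)" by (simp add: algebra_simps)
    also have "\<dots> = Re w * x + a*(Re w + 1)*y" by (simp only: ab) (simp add: algebra_simps)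
    also have "\<dots> = Re w * x - Im w * y" by (simp add: ac)
    finally show ?thesis .
  qed
  have r2: "y + b*(x + a*y) = Im w * x + Re w * y" for x y
  proof -
    have "y + b*(x + a*y) = y + b*x + (a*b)*y" by (simp add: algebra_simps)
    also have "\<dots> = Im w * x + Re w * y" by (simp only: ab) (simp add: b_def algebra_simps)
    finally show ?thesis .
  qed
  have i1: "v \<bullet> axis i \<i> = Im (v$i)" "v \<bullet> axis i 1 = Re (v$i)" for v :: "complex^'n"
    by (simp_all add: inner_axis)
  have c1: "(v + c *\<^sub>R axis i d)$j = v$j + (if j = i then c *\<^sub>R d else 0)" for v :: "complex^'n" and c d j
    by (simp add: axis_def)
  have eq: "Dv (\<lambda>j. if j = i then w else 1) z = X (Y (X z))" for z
  proof -
    have "(X (Y (X z)))$i = w * z$i"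
    proof -
      have "(X (Y (X z)))$i = Complex (Re (z$i) + a*Im (z$i) + a*(Im (z$i) + b*(Re (z$i) + a*Im (z$i))))
                                       (Im (z$i) + b*(Re (z$i) + a*Im (z$i)))"
        unfolding X_def Y_def i1 c1 by (simp add: complex_eq_iff)
      also have "\<dots> = Complex (Re w * Re (z$i) - Im w * Im (z$i)) (Im w * Re (z$i) + Re w * Im (z$i))"
        by (subst r1, subst r2, rule refl)
      also have "\<dots> = w * z$i" by (simp add: complex_eq_iff)
      finally show ?thesis .
    qed
    moreover have "(X (Y (X z)))$j = z$j" if "j \<noteq> i" for j
      unfolding X_def Y_def c1 using that by simp
    ultimately show ?thesis
      unfolding vec_eq_iff Dv_def by auto
  qed
  have "(\<integral>\<^sup>+z. f (Dv (\<lambda>j. if j = i then w else 1) z) \<partial>lborel) = (\<integral>\<^sup>+z. (\<lambda>z. f (X (Y z))) (X z) \<partial>lborel)"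
    by (simp add: eq)
  also have "\<dots> = (\<integral>\<^sup>+z. (\<lambda>z. f (X z)) (Y z) \<partial>lborel)"
    unfolding X_def by (rule shear_inv) (use B in auto)
  also have "\<dots> = (\<integral>\<^sup>+z. f (X z) \<partial>lborel)"
    unfolding Y_def by (rule shear_inv) (use B in auto)
  also have "\<dots> = (\<integral>\<^sup>+z. f z \<partial>lborel)"
    unfolding X_def by (rule shear_inv) (use B in auto)
  finally show ?thesis .
qed

lemma Dv_Dv: "Dv a (Dv b z) = Dv (\<lambda>j. a j * b j) z"
  unfolding Dv_def by (simp add: vec_eq_iff)

lemma Dv_one: "Dv (\<lambda>j. 1) z = z"
  unfolding Dv_def by (simp add: vec_eq_iff)

lemma rot_inv:
  fixes f :: "complex^'n \<Rightarrow> ennreal"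
  assumes f[measurable]: "f \<in> borel_measurable borel" and w: "cmod w = 1"
  shows "(\<integral>\<^sup>+z. f (Dv (\<lambda>j. if j = i then w else 1) z) \<partial>lborel) = (\<integral>\<^sup>+z. f z \<partial>lborel)"
proof (cases "Im w = 0")
  case False
  then show ?thesis using rot_inv0[OF f w] by simp
next
  case True
  have "\<bar>Re w\<bar> = 1" using w True by (simp add: cmod_def)
  then have "Re w = 1 \<or> Re w = -1" by linarith
  then show ?thesis
  proof
    assume "Re w = 1"
    then have "w = 1" using True by (simp add: complex_eq_iff)
    then have "(\<lambda>j. if j = i then w else (1::complex)) = (\<lambda>j. 1)" by auto
    then show ?thesis by (simp only: Dv_one)
  next
    assume "Re w = -1"
    then have w1: "w = \<i> * \<i>" using True by (simp add: complex_eq_iff)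
    have e: "Dv (\<lambda>j. if j = i then w else 1) z = Dv (\<lambda>j. if j = i then \<i> else 1) (Dv (\<lambda>j. if j = i then \<i> else 1) z)" for z
      by (simp add: Dv_Dv w1 if_distrib cong: if_cong)
    have "(\<integral>\<^sup>+z. f (Dv (\<lambda>j. if j = i then w else 1) z) \<partial>lborel)
        = (\<integral>\<^sup>+z. (\<lambda>z. f (Dv (\<lambda>j. if j = i then \<i> else 1) z)) (Dv (\<lambda>j. if j = i then \<i> else 1) z) \<partial>lborel)"
      by (simp add: e)
    also have "\<dots> = (\<integral>\<^sup>+z. f (Dv (\<lambda>j. if j = i then \<i> else 1) z) \<partial>lborel)"
      by (rule rot_inv0) auto
    also have "\<dots> = (\<integral>\<^sup>+z. f z \<partial>lborel)"
      by (rule rot_inv0) auto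
    finally show ?thesis .
  qed
qed

lemma Dv_inv:
  fixes f :: "complex^'n \<Rightarrow> ennreal"
  assumes f[measurable]: "f \<in> borel_measurable borel" and v: "\<And>j. cmod (v j) = 1"
  shows "(\<integral>\<^sup>+z. f (Dv v z) \<partial>lborel) = (\<integral>\<^sup>+z. f z \<partial>lborel)"
proof -
  have "\<forall>f::complex^'n \<Rightarrow> ennreal. f \<in> borel_measurable borel \<longrightarrow>
      (\<integral>\<^sup>+z. f (Dv (\<lambda>j. if j \<in> S then v j else 1) z) \<partial>lborel) = (\<integral>\<^sup>+z. f z \<partial>lborel)"
    if "finite S" for S
    using that
  proof (induction S rule: finite_induct)
    case empty
    then show ?case by (simp add: Dv_one)
  next
    case (insert i S)
    show ?case
    proof (intro allI impI)
      fix f :: "complex^'n \<Rightarrow> ennreal"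
      assume fm[measurable]: "f \<in> borel_measurable borel"
      have e: "Dv (\<lambda>j. if j \<in> insert i S then v j else 1) z
          = Dv (\<lambda>j. if j = i then v i else 1) (Dv (\<lambda>j. if j \<in> S then v j else 1) z)" for z
        using insert.hyps by (simp add: Dv_Dv) (rule arg_cong[where f="\<lambda>g. Dv g z"], auto)
      have "(\<integral>\<^sup>+z. f (Dv (\<lambda>j. if j \<in> insert i S then v j else 1) z) \<partial>lborel)
          = (\<integral>\<^sup>+z. (\<lambda>z. f (Dv (\<lambda>j. if j = i then v i else 1) z)) (Dv (\<lambda>j. if j \<in> S then v j else 1) z) \<partial>lborel)"
        by (simp only: e)
      also have "\<dots> = (\<integral>\<^sup>+z. f (Dv (\<lambda>j. if j = i then v i else 1) z) \<partial>lborel)"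
        by (rule insert.IH[rule_format]) measurable
      also have "\<dots> = (\<integral>\<^sup>+z. f z \<partial>lborel)"
        by (rule rot_inv) (auto simp: v)
      finally show "(\<integral>\<^sup>+z. f (Dv (\<lambda>j. if j \<in> insert i S then v j else 1) z) \<partial>lborel) = (\<integral>\<^sup>+z. f z \<partial>lborel)" .
    qed
  qed
  from this[of UNIV] show ?thesis using f by simp
qed



lemma sq_add_le: "(a + b)^2 \<le> 4 * a^2 + 4 * (b::ennreal)^2"
proof -
  have m: "(a + b)^2 \<le> 4 * (max a b)^2"
  proof -
    have "a + b \<le> 2 * max a b" by (simp add: mult_2 add_mono)
    then have "(a + b)^2 \<le> (2 * max a b)^2" by (rule power_mono) simp
    also have "\<dots> = 4 * (max a b)^2" by (simp add: power_mult_distrib)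
    finally show ?thesis .
  qed
  have "(max a b)^2 \<le> a^2 + b^2"
    by (cases "a \<le> b") (auto simp: max_def intro: add_increasing add_increasing2)
  then have "4 * (max a b)^2 \<le> 4 * (a^2 + b^2)" by (rule mult_left_mono) simp
  with m show ?thesis by (simp add: distrib_left)
qed

lemma L2_mono:
  assumes "\<And>z. f z \<le> g z" "L2_infty g"
  shows "L2_infty f"
proof -
  obtain K where K: "compact K" "(\<integral>\<^sup>+ z\<in>(UNIV - K). (g z)^2 \<partial>lborel) < \<infinity>"
    using assms(2) unfolding L2_infty_def by blast
  have "(\<integral>\<^sup>+ z\<in>(UNIV - K). (f z)^2 \<partial>lborel) \<le> (\<integral>\<^sup>+ z\<in>(UNIV - K). (g z)^2 \<partial>lborel)"
    by (intro nn_integral_mono mult_right_mono power_mono assms(1)) auto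
  with K show ?thesis unfolding L2_infty_def by (meson le_less_trans)
qed

lemma L2_zero: "L2_infty (\<lambda>z. 0)"
  unfolding L2_infty_def by (rule exI[of _ "{}"]) simp

lemma L2_add:
  assumes [measurable]: "f \<in> borel_measurable borel" "g \<in> borel_measurable borel"
    and "L2_infty f" "L2_infty g"
  shows "L2_infty (\<lambda>z. f z + g z)"
proof -
  obtain K1 where K1: "compact K1" "(\<integral>\<^sup>+ z\<in>(UNIV - K1). (f z)^2 \<partial>lborel) < \<infinity>"
    using assms(3) unfolding L2_infty_def by blast
  obtain K2 where K2: "compact K2" "(\<integral>\<^sup>+ z\<in>(UNIV - K2). (g z)^2 \<partial>lborel) < \<infinity>"
    using assms(4) unfolding L2_infty_def by blast
  have [measurable]: "UNIV - K1 \<in> sets borel" "UNIV - K2 \<in> sets borel"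
    using K1(1) K2(1) by (auto intro!: borel_open open_Diff compact_imp_closed)
  have "(\<integral>\<^sup>+ z\<in>(UNIV - (K1 \<union> K2)). (f z + g z)^2 \<partial>lborel)
      \<le> (\<integral>\<^sup>+ z. 4 * ((f z)^2 * indicator (UNIV - K1) z) + 4 * ((g z)^2 * indicator (UNIV - K2) z) \<partial>lborel)"
  proof (intro nn_integral_mono)
    fix z
    show "(f z + g z)^2 * indicator (UNIV - (K1 \<union> K2)) z
        \<le> 4 * ((f z)^2 * indicator (UNIV - K1) z) + 4 * ((g z)^2 * indicator (UNIV - K2) z)"
      using sq_add_le[of "f z" "g z"] by (auto split: split_indicator)
  qed
  also have "\<dots> = 4 * (\<integral>\<^sup>+ z\<in>(UNIV - K1). (f z)^2 \<partial>lborel) + 4 * (\<integral>\<^sup>+ z\<in>(UNIV - K2). (g z)^2 \<partial>lborel)"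
    by (simp add: nn_integral_add nn_integral_cmult)
  also have "\<dots> < \<infinity>"
    using K1(2) K2(2) by (simp add: ennreal_mult_less_top)
  finally show ?thesis unfolding L2_infty_def using K1(1) K2(1) by (blast intro: compact_Un)
qed

lemma L2_sum:
  assumes "finite T" "\<And>k. k \<in> T \<Longrightarrow> g k \<in> borel_measurable borel" "\<And>k. k \<in> T \<Longrightarrow> L2_infty (g k)"
  shows "L2_infty (\<lambda>z. \<Sum>k\<in>T. g k z)"
  using assms
proof (induction T rule: finite_induct)
  case empty
  then show ?case by (simp add: L2_zero)
next
  case (insert k T)
  have m: "(\<lambda>z. \<Sum>k\<in>T. g k z) \<in> borel_measurable borel"
    using insert.prems by (intro borel_measurable_sum) auto
  show ?case
    using insert L2_add[OF _ m, of "g k"] by simp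
qed

lemma L2_cmult:
  assumes "c < \<infinity>" "g \<in> borel_measurable borel" "L2_infty g"
  shows "L2_infty (\<lambda>z. c * g z)"
proof -
  obtain K where K: "compact K" "(\<integral>\<^sup>+ z\<in>(UNIV - K). (g z)^2 \<partial>lborel) < \<infinity>"
    using assms(3) unfolding L2_infty_def by blast
  have [measurable]: "UNIV - K \<in> sets borel" "g \<in> borel_measurable borel"
    using K(1) assms(2) by (auto intro!: borel_open open_Diff compact_imp_closed)
  have "(\<integral>\<^sup>+ z\<in>(UNIV - K). (c * g z)^2 \<partial>lborel) = c^2 * (\<integral>\<^sup>+ z\<in>(UNIV - K). (g z)^2 \<partial>lborel)"
    by (simp add: power_mult_distrib mult.assoc nn_integral_cmult)
  also have "\<dots> < \<infinity>" using K(2) assms(1) by (simp add: ennreal_mult_less_top power_less_top_ennreal)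
  finally show ?thesis using K(1) unfolding L2_infty_def by blast
qed



lemma Dv_cont: "continuous_on A (Dv v)"
  unfolding Dv_def by (intro continuous_intros)

lemma L2_Dv:
  assumes gm[measurable]: "g \<in> borel_measurable borel" and "L2_infty g" and v: "\<And>j. cmod (v j) = 1"
  shows "L2_infty (\<lambda>z. g (Dv v z))"
proof -
  obtain K where K: "compact K" "(\<integral>\<^sup>+ z\<in>(UNIV - K). (g z)^2 \<partial>lborel) < \<infinity>"
    using assms(2) unfolding L2_infty_def by blast
  have [measurable]: "UNIV - K \<in> sets borel"
    using K(1) by (auto intro!: borel_open open_Diff compact_imp_closed)
  define K' where "K' = Dv (\<lambda>j. cnj (v j)) ` K"
  have cK': "compact K'" unfolding K'_def
    by (rule compact_continuous_image[OF Dv_cont K(1)])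
  have vv: "(\<lambda>j. cnj (v j) * v j) = (\<lambda>j. 1)" "(\<lambda>j. v j * cnj (v j)) = (\<lambda>j. 1)"
  proof -
    have "v j * cnj (v j) = 1" for j using complex_norm_square[of "v j"] v[of j] by simp
    then show "(\<lambda>j. cnj (v j) * v j) = (\<lambda>j. 1)" "(\<lambda>j. v j * cnj (v j)) = (\<lambda>j. 1)"
      by (auto simp: mult.commute)
  qed
  have mem: "z \<in> K' \<longleftrightarrow> Dv v z \<in> K" for z
  proof
    assume "z \<in> K'"
    then obtain k where "k \<in> K" "z = Dv (\<lambda>j. cnj (v j)) k" unfolding K'_def by blast
    then show "Dv v z \<in> K" by (simp add: Dv_Dv vv Dv_one)
  next
    assume "Dv v z \<in> K"
    moreover have "z = Dv (\<lambda>j. cnj (v j)) (Dv v z)" by (simp add: Dv_Dv vv Dv_one)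
    ultimately show "z \<in> K'" unfolding K'_def by blast
  qed
  have "(\<integral>\<^sup>+ z\<in>(UNIV - K'). (g (Dv v z))^2 \<partial>lborel)
      = (\<integral>\<^sup>+ z. (\<lambda>w. (g w)^2 * indicator (UNIV - K) w) (Dv v z) \<partial>lborel)"
    by (intro nn_integral_cong) (simp add: mem split: split_indicator)
  also have "\<dots> = (\<integral>\<^sup>+ z\<in>(UNIV - K). (g z)^2 \<partial>lborel)"
    by (rule Dv_inv) (auto simp: v)
  finally show ?thesis using K cK' unfolding L2_infty_def by auto
qed



lemma root_q:
  fixes N a b :: nat
  assumes N: "N > 0" and a: "a < N" and b: "b < N"
  defines "\<omega> \<equiv> cis (2 * pi / N)"
  shows "(\<omega>^a * cnj \<omega>^b)^N = 1" and "(\<omega>^a * cnj \<omega>^b = 1) \<longleftrightarrow> a = b"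
proof -
  have q: "\<omega>^a * cnj \<omega>^b = cis ((real a - real b) * (2 * pi / N))"
    unfolding \<omega>_def cis_cnj Complex.DeMoivre cis_mult by (rule arg_cong[where f=cis]) (simp add: left_diff_distrib diff_divide_distrib)
  show "(\<omega>^a * cnj \<omega>^b)^N = 1"
  proof -
    have "(\<omega>^a * cnj \<omega>^b)^N = cis (2 * pi * (real a - real b))"
    proof -
      have N': "real N \<noteq> 0" using N by simp
      have "real N * ((real a - real b) * (2 * pi / real N)) = 2 * pi * (real a - real b)"
        using N' by (simp add: field_simps)
      then show ?thesis unfolding q Complex.DeMoivre by simp
    qed
    also have "\<dots> = cis (2 * pi * of_int (int a - int b))" by simp
    also have "\<dots> = 1" by (rule cis_multiple_2pi) simp
    finally show ?thesis .
  qed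
  show "(\<omega>^a * cnj \<omega>^b = 1) \<longleftrightarrow> a = b"
  proof
    assume that_eq: "\<omega>^a * cnj \<omega>^b = 1"
    then have "cos ((real a - real b) * (2 * pi / N)) = 1"
    proof -
      have "Re (cis ((real a - real b) * (2 * pi / N))) = 1" using that_eq unfolding q by simp
      then show ?thesis by simp
    qed
    then obtain n :: int where n: "(real a - real b) * (2 * pi / N) = n * 2 * pi"
      by (auto simp: cos_one_2pi_int)
    have N': "real N \<noteq> 0" using N by simp
    have "(real a - real b) * (2 * pi) = (real a - real b) * (2 * pi / N) * N" using N' by simp
    also have "\<dots> = (n * N) * (2 * pi)" unfolding n by (simp add: algebra_simps)
    finally have "real a - real b = n * N" by simp
    then have "int a - int b = n * int N" by (metis of_int_eq_iff of_int_diff of_int_mult of_int_of_nat_eq)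
    moreover have "\<bar>int a - int b\<bar> < int N" using a b by auto
    ultimately have "\<bar>n\<bar> * int N < 1 * int N" by (simp add: abs_mult)
    then have "\<bar>n\<bar> < 1" by (rule mult_right_less_imp_less) simp
    then have "n = 0" by simp
    with \<open>int a - int b = n * int N\<close> show "a = b" by simp
  next
    assume "a = b"
    have "\<omega> * cnj \<omega> = 1" unfolding \<omega>_def by (simp add: cis_cnj cis_mult)
    then show "\<omega>^a * cnj \<omega>^b = 1" using \<open>a = b\<close> by (simp flip: power_mult_distrib)
  qed
qed

lemma geom_sum_root:
  fixes N a b :: nat
  assumes N: "N > 0" and a: "a < N" and b: "b < N"
  defines "\<omega> \<equiv> cis (2 * pi / N)"
  shows "(\<Sum>m<N. (\<omega>^a * cnj \<omega>^b)^m) = (if a = b then of_nat N else 0)"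
  using root_q[OF N a b] unfolding \<omega>_def by (auto simp: sum_gp_strict)

lemma char_sum:
  fixes N :: nat and J J0 :: "'n::finite \<Rightarrow> nat"
  assumes N: "N > 0" and J: "\<And>j. J j < N" and J0: "\<And>j. J0 j < N"
  defines "\<omega> \<equiv> cis (2 * pi / N)"
  shows "(\<Sum>k\<in>PiE UNIV (\<lambda>_. {..<N}). \<Prod>j\<in>UNIV. (\<omega>^(J j) * cnj \<omega>^(J0 j))^(k j))
       = (if J = J0 then of_nat N ^ CARD('n) else 0)"
proof -
  have "(\<Sum>k\<in>PiE UNIV (\<lambda>_. {..<N}). \<Prod>j\<in>UNIV. (\<omega>^(J j) * cnj \<omega>^(J0 j))^(k j))
      = (\<Prod>j\<in>UNIV. \<Sum>m<N. (\<omega>^(J j) * cnj \<omega>^(J0 j))^m)"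
    by (rule prod_sum_PiE[symmetric]) auto
  also have "\<dots> = (\<Prod>j\<in>UNIV. if J j = J0 j then of_nat N else 0)"
    unfolding \<omega>_def using geom_sum_root[OF N J J0] by simp
  also have "\<dots> = (if J = J0 then of_nat N ^ CARD('n) else 0)"
  proof (cases "J = J0")
    case True
    then show ?thesis by simp
  next
    case False
    then obtain j where "J j \<noteq> J0 j" by auto
    then have "(\<Prod>j\<in>UNIV. if J j = J0 j then of_nat N else (0::complex)) = 0"
      by (intro prod_zero) (auto intro!: bexI[of _ j])
    then show ?thesis using False by simp
  qed
  finally show ?thesis .
qed



lemma eexp_alt: "eexp x = (if x = \<infinity> then \<infinity> else if x = -\<infinity> then 0 else ennreal (exp (real_of_ereal x)))"
  by (cases x) (auto simp: eexp_def)

lemma eexp_meas[measurable]: "eexp \<in> borel_measurable borel"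
  unfolding eexp_alt[abs_def] by measurable

lemma eexp_mono: "x \<le> y \<Longrightarrow> eexp x \<le> eexp y"
  by (cases x; cases y) (auto simp: eexp_def ennreal_leI)

lemma usc_meas:
  fixes u :: "'a::topological_space \<Rightarrow> ereal"
  assumes "usc u"
  shows "u \<in> borel_measurable borel"
proof (rule borel_measurableI_less)
  fix y :: ereal
  show "{x \<in> space borel. u x < y} \<in> sets borel"
  proof (cases y)
    case (real r)
    then show ?thesis using assms unfolding usc_def by (auto intro!: borel_open)
  next
    case PInf
    have "{x \<in> space borel. u x < y} = (\<Union>n::nat. {x. u x < ereal (real n)})"
      using PInf less_PInf_Ex_of_nat by auto
    also have "\<dots> \<in> sets borel"
      using assms unfolding usc_def by (intro sets.countable_UN) (auto intro!: borel_open)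
    finally show ?thesis .
  next
    case MInf
    then show ?thesis by simp
  qed
qed

lemma monomial_meas[measurable]: "monomial J \<in> borel_measurable borel"
  unfolding monomial_def[abs_def] by (intro borel_measurable_continuous_onI continuous_intros)

lemma monomial_Dv: "monomial J (Dv v z) = (\<Prod>j\<in>UNIV. v j ^ J j) * monomial J z"
  unfolding monomial_def Dv_def by (simp add: power_mult_distrib prod.distrib)



lemma toric_Dv:
  assumes "toric u" "\<And>j. cmod (v j) = 1"
  shows "u (Dv v z) = u z"
  using assms unfolding toric_def Dv_def by (auto simp: norm_mult)

lemma extract_monomial:
  fixes u :: "complex^'n::finite \<Rightarrow> ereal" and P :: "complex^'n \<Rightarrow> complex"
  assumes tor: "toric u" and um[measurable]: "u \<in> borel_measurable borel"
    and S: "finite S" and Pz: "\<And>z. P z = (\<Sum>J\<in>S. c J * monomial J z)"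
    and L2P: "L2_infty (\<lambda>z. ennreal (norm (P z)) * eexp (- u z))"
    and J0: "J0 \<in> S" and cJ0: "c J0 \<noteq> 0"
  shows "L2_infty (\<lambda>z. ennreal (norm (monomial J0 z)) * eexp (- u z))"
proof -
  define N where "N = Suc (\<Sum>J\<in>S. \<Sum>j\<in>UNIV. J j)"
  have N0: "N > 0" unfolding N_def by simp
  have Nbig: "J j < N" if "J \<in> S" for J j
  proof -
    have "J j \<le> (\<Sum>j\<in>UNIV. J j)" by (rule member_le_sum) auto
    also have "\<dots> \<le> (\<Sum>J\<in>S. \<Sum>j\<in>UNIV. J j)" by (rule member_le_sum[OF that]) (auto simp: S)
    finally show ?thesis unfolding N_def by simp
  qed
  define \<omega> where "\<omega> = cis (2 * pi / N)"
  define KS where "KS = PiE (UNIV::'n set) (\<lambda>_. {..<N})"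
  have KSf: "finite KS" unfolding KS_def by (rule finite_PiE) auto
  define D where "D k = Dv (\<lambda>j. \<omega> ^ (k j))" for k :: "'n \<Rightarrow> nat"
  have nw: "cmod (\<omega> ^ (k j)) = 1" for k :: "'n \<Rightarrow> nat" and j
    unfolding \<omega>_def by (simp add: norm_power)
  define g where "g z = ennreal (norm (P z)) * eexp (- u z)" for z
  have Pm[measurable]: "P \<in> borel_measurable borel"
  proof -
    have "P = (\<lambda>z. \<Sum>J\<in>S. c J * monomial J z)" using Pz by auto
    then show ?thesis by simp
  qed
  have gm[measurable]: "g \<in> borel_measurable borel" unfolding g_def[abs_def] by measurable
  have L2g: "L2_infty g" using L2P unfolding g_def[abs_def] .
  have L2D: "L2_infty (\<lambda>z. \<Sum>k\<in>KS. g (D k z))"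
  proof (rule L2_sum[OF KSf])
    fix k show "(\<lambda>z. g (D k z)) \<in> borel_measurable borel" unfolding D_def by measurable
    show "L2_infty (\<lambda>z. g (D k z))" unfolding D_def by (rule L2_Dv[OF gm L2g nw])
  qed
  have ident: "(\<Sum>k\<in>KS. (\<Prod>j\<in>UNIV. cnj \<omega> ^ (J0 j * k j)) * P (D k z))
      = of_nat N ^ CARD('n) * (c J0 * monomial J0 z)" for z
  proof -
    have "(\<Sum>k\<in>KS. (\<Prod>j\<in>UNIV. cnj \<omega> ^ (J0 j * k j)) * P (D k z))
        = (\<Sum>k\<in>KS. \<Sum>J\<in>S. c J * monomial J z * (\<Prod>j\<in>UNIV. (\<omega>^(J j) * cnj \<omega>^(J0 j))^(k j)))"
    proof (rule sum.cong[OF refl])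
      fix k
      have pid: "(\<Prod>j\<in>UNIV. cnj \<omega> ^ (J0 j * k j)) * (\<Prod>j\<in>UNIV. (\<omega> ^ k j) ^ J j)
          = (\<Prod>j\<in>UNIV. (\<omega>^(J j) * cnj \<omega>^(J0 j))^(k j))" for J :: "'n \<Rightarrow> nat"
      proof -
        have "cnj \<omega> ^ (J0 j * k j) * (\<omega> ^ k j) ^ J j = (\<omega>^(J j) * cnj \<omega>^(J0 j))^(k j)" for j
        proof -
          have "(\<omega>^(J j) * cnj \<omega>^(J0 j))^(k j) = \<omega>^(J j * k j) * cnj \<omega>^(J0 j * k j)"
            by (simp only: power_mult_distrib power_mult)
          also have "\<dots> = cnj \<omega> ^ (J0 j * k j) * (\<omega> ^ k j) ^ J j"
            by (simp only: power_mult[symmetric] mult.commute[of "k j" "J j"] mult.commute[of "\<omega>^(J j * k j)"])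
          finally show ?thesis by simp
        qed
        then show ?thesis by (simp only: prod.distrib[symmetric])
      qed
      have gen: "\<And>A B cc m :: complex. A * (cc * (B * m)) = cc * m * (A * B)" by (simp add: mult_ac)
      have fac: "(\<Prod>j\<in>UNIV. cnj \<omega> ^ (J0 j * k j)) * (c J * ((\<Prod>j\<in>UNIV. (\<omega> ^ k j) ^ J j) * monomial J z))
          = c J * monomial J z * (\<Prod>j\<in>UNIV. (\<omega>^(J j) * cnj \<omega>^(J0 j))^(k j))" for J :: "'n \<Rightarrow> nat"
        by (simp only: gen pid)
      show "(\<Prod>j\<in>UNIV. cnj \<omega> ^ (J0 j * k j)) * P (D k z)
          = (\<Sum>J\<in>S. c J * monomial J z * (\<Prod>j\<in>UNIV. (\<omega>^(J j) * cnj \<omega>^(J0 j))^(k j)))"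
        unfolding Pz D_def monomial_Dv sum_distrib_left fac ..
    qed
    also have "\<dots> = (\<Sum>J\<in>S. c J * monomial J z * (\<Sum>k\<in>KS. \<Prod>j\<in>UNIV. (\<omega>^(J j) * cnj \<omega>^(J0 j))^(k j)))"
      by (simp add: sum.swap[of _ KS] sum_distrib_left)
    also have "\<dots> = (\<Sum>J\<in>S. c J * monomial J z * (if J = J0 then of_nat N ^ CARD('n) else 0))"
    proof (rule sum.cong[OF refl])
      fix J assume "J \<in> S"
      show "c J * monomial J z * (\<Sum>k\<in>KS. \<Prod>j\<in>UNIV. (\<omega>^(J j) * cnj \<omega>^(J0 j))^(k j))
          = c J * monomial J z * (if J = J0 then of_nat N ^ CARD('n) else 0)"
      proof -
        have a: "\<And>j. J j < N" using Nbig \<open>J \<in> S\<close> by blast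
        have b: "\<And>j. J0 j < N" using Nbig J0 by blast
        show ?thesis unfolding KS_def \<omega>_def using char_sum[of N J J0, OF N0 a b] by simp
      qed
    qed
    also have "\<dots> = of_nat N ^ CARD('n) * (c J0 * monomial J0 z)"
      using S J0 by (simp add: if_distrib[of "\<lambda>x. _ * x"] sum.delta cong: if_cong)
    finally show ?thesis .
  qed
  have pw: "ennreal (norm (c J0) * norm (monomial J0 z)) * eexp (- u z) \<le> (\<Sum>k\<in>KS. g (D k z))" for z
  proof -
    have "norm (c J0) * norm (monomial J0 z) \<le> real N ^ CARD('n) * norm (c J0 * monomial J0 z)"
    proof -
      have "1 \<le> real N ^ CARD('n)" using N0 by simp
      moreover have "0 \<le> norm (c J0) * norm (monomial J0 z)" by simp
      ultimately have "1 * (norm (c J0) * norm (monomial J0 z)) \<le> real N ^ CARD('n) * (norm (c J0) * norm (monomial J0 z))"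
        by (rule mult_right_mono)
      then show ?thesis by (simp add: norm_mult)
    qed
    also have "\<dots> = norm (\<Sum>k\<in>KS. (\<Prod>j\<in>UNIV. cnj \<omega> ^ (J0 j * k j)) * P (D k z))"
      unfolding ident by (simp add: norm_mult norm_power)
    also have "\<dots> \<le> (\<Sum>k\<in>KS. norm ((\<Prod>j\<in>UNIV. cnj \<omega> ^ (J0 j * k j)) * P (D k z)))"
      by (rule norm_sum)
    also have "\<dots> = (\<Sum>k\<in>KS. norm (P (D k z)))"
      unfolding \<omega>_def by (simp add: norm_mult prod_norm[symmetric] norm_power)
    finally have r: "norm (c J0) * norm (monomial J0 z) \<le> (\<Sum>k\<in>KS. norm (P (D k z)))" .
    have "ennreal (norm (c J0) * norm (monomial J0 z)) * eexp (- u z)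
        \<le> ennreal (\<Sum>k\<in>KS. norm (P (D k z))) * eexp (- u z)"
      by (intro mult_right_mono ennreal_leI r) simp
    also have "\<dots> = (\<Sum>k\<in>KS. ennreal (norm (P (D k z))) * eexp (- u z))"
    proof -
      have "ennreal (\<Sum>k\<in>KS. norm (P (D k z))) = (\<Sum>k\<in>KS. ennreal (norm (P (D k z))))"
        by (rule sum_ennreal[symmetric]) simp
      then show ?thesis by (simp only: sum_distrib_right)
    qed
    also have "\<dots> = (\<Sum>k\<in>KS. g (D k z))"
    proof -
      have "u (Dv (\<lambda>j. \<omega> ^ k j) z) = u z" for k :: "'n \<Rightarrow> nat"
        by (rule toric_Dv[OF tor]) (rule nw)
      then show ?thesis unfolding g_def D_def by simp
    qed
    finally show ?thesis .
  qed
  have L2a: "L2_infty (\<lambda>z. ennreal (norm (c J0) * norm (monomial J0 z)) * eexp (- u z))"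
    by (rule L2_mono[OF pw L2D])
  have L2b: "L2_infty (\<lambda>z. ennreal (1 / norm (c J0)) * (ennreal (norm (c J0) * norm (monomial J0 z)) * eexp (- u z)))"
    by (rule L2_cmult[OF _ _ L2a]) auto
  show ?thesis
  proof (rule L2_mono[OF _ L2b])
    fix z
    have "ennreal (1 / norm (c J0)) * ennreal (norm (c J0) * norm (monomial J0 z)) = ennreal (norm (monomial J0 z))"
      using cJ0 by (simp add: ennreal_mult[symmetric])
    then show "ennreal (norm (monomial J0 z)) * eexp (- u z)
        \<le> ennreal (1 / norm (c J0)) * (ennreal (norm (c J0) * norm (monomial J0 z)) * eexp (- u z))"
      by (simp add: mult.assoc[symmetric])
  qed
qed



lemma inner_const_axis:
  fixes c :: complex
  shows "(\<chi> j. c) \<bullet> axis i 1 = Re c" "(\<chi> j. c) \<bullet> axis i \<i> = Im c"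
  by (simp_all add: inner_axis)

lemma Basis_cases_vec:
  assumes "e \<in> (Basis :: (complex^'n) set)"
  obtains i where "e = axis i 1" | i where "e = axis i \<i>"
  using assms by (auto simp: Basis_vec_def Basis_complex_def)

lemma emeasure_unit_box:
  fixes t :: real
  defines "a \<equiv> (\<chi> j. complex_of_real t) :: complex^'n"
  defines "b \<equiv> (\<chi> j. Complex (t + 1) 1) :: complex^'n"
  shows "emeasure lborel (cbox a b) = 1"
proof -
  have ab: "(b - a) \<bullet> e = 1" if "e \<in> Basis" for e
    using that
  proof (cases rule: Basis_cases_vec)
    case (1 i) then show ?thesis by (simp add: a_def b_def inner_axis)
  next
    case (2 i) then show ?thesis by (simp add: a_def b_def inner_axis)
  qed
  have "a \<bullet> e \<le> b \<bullet> e" if "e \<in> Basis" for e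
    using ab[OF that] by (simp add: inner_diff_left)
  then have "emeasure lborel (cbox a b) = (\<Prod>e\<in>Basis. (b - a) \<bullet> e)"
    by (rule emeasure_lborel_cbox)
  also have "\<dots> = 1" using ab by simp
  finally show ?thesis .
qed

lemma mem_unit_box:
  fixes t :: real
  assumes "z \<in> cbox ((\<chi> j. complex_of_real t) :: complex^'n) (\<chi> j. Complex (t + 1) 1)"
  shows "t \<le> Re (z$j)" "Re (z$j) \<le> t + 1" "0 \<le> Im (z$j)" "Im (z$j) \<le> 1"
proof -
  have B: "axis j 1 \<in> (Basis :: (complex^'n) set)" "axis j \<i> \<in> (Basis :: (complex^'n) set)"
    by (auto simp: Basis_vec_def)
  have h1: "(\<chi> j. complex_of_real t) \<bullet> axis j 1 \<le> z \<bullet> axis j 1 \<and> z \<bullet> axis j 1 \<le> (\<chi> j. Complex (t + 1) 1) \<bullet> (axis j 1 :: complex^'n)"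
    using assms B(1) unfolding mem_box by blast
  have h2: "(\<chi> j. complex_of_real t) \<bullet> axis j \<i> \<le> z \<bullet> axis j \<i> \<and> z \<bullet> axis j \<i> \<le> (\<chi> j. Complex (t + 1) 1) \<bullet> (axis j \<i> :: complex^'n)"
    using assms B(2) unfolding mem_box by blast
  from h1 h2 show "t \<le> Re (z$j)" "Re (z$j) \<le> t + 1" "0 \<le> Im (z$j)" "Im (z$j) \<le> 1"
    by (simp_all add: inner_axis)
qed


lemma norm_le_l1_vec: "norm (x :: complex^'n) \<le> (\<Sum>i\<in>UNIV. norm (x$i))"
  by (simp add: norm_vec_def L2_set_le_sum)

lemma mono_bound:
  fixes u :: "complex^'n::finite \<Rightarrow> ereal"
  assumes A: "A \<ge> 0" and bnd: "\<And>z. norm z \<ge> R \<Longrightarrow> u z \<le> ereal (A * ln (norm z))"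
    and L2: "L2_infty (\<lambda>z. ennreal (norm (monomial J z)) * eexp (- u z))"
  shows "real (\<Sum>j\<in>UNIV. J j) < A + 1"
proof (rule ccontr)
  define d where "d = (\<Sum>j\<in>UNIV. J j)"
  assume "\<not> real (\<Sum>j\<in>UNIV. J j) < A + 1"
  then have dA: "A + 1 \<le> real d" unfolding d_def by simp
  define f where "f z = ennreal (norm (monomial J z)) * eexp (- u z)" for z
  obtain K where K: "compact K" "(\<integral>\<^sup>+ z\<in>(UNIV - K). (f z)^2 \<partial>lborel) < \<infinity>"
    using L2 unfolding L2_infty_def f_def by blast
  obtain M where M: "\<And>x. x \<in> K \<Longrightarrow> norm x \<le> M"
    using compact_imp_bounded[OF K(1)] unfolding bounded_iff by blast
  obtain r where r: "0 \<le> r" "(\<integral>\<^sup>+ z\<in>(UNIV - K). (f z)^2 \<partial>lborel) = ennreal r"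
    using K(2) by (cases "(\<integral>\<^sup>+ z\<in>(UNIV - K). (f z)^2 \<partial>lborel)") auto
  define n where "n = real CARD('n)"
  have n1: "n \<ge> 1" unfolding n_def by simp
  define C where "C = (3 * n) powr (-A)"
  have C0: "C > 0" unfolding C_def using n1 by simp
  define t where "t = max (max R (M+1)) (max 1 ((r+1)/C))"
  have t1: "t \<ge> 1" and tR: "t \<ge> R" and tM: "t > M"
    unfolding t_def by auto
  have tC: "C * t \<ge> r + 1"
  proof -
    have "(r+1)/C \<le> t" unfolding t_def by simp
    then have "C * ((r+1)/C) \<le> C * t" by (rule mult_left_mono) (use C0 in simp)
    then show ?thesis using C0 by simp
  qed
  define B where "B = cbox ((\<chi> j. complex_of_real t) :: complex^'n) (\<chi> j. Complex (t + 1) 1)"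
  have Bm: "B \<in> sets lborel" unfolding B_def by simp
  have pw: "ennreal (C * t) \<le> f z" if z: "z \<in> B" for z
  proof -
    have cj: "t \<le> norm (z$j) \<and> norm (z$j) \<le> 3 * t" for j
    proof -
      have h: "t \<le> Re (z$j)" "Re (z$j) \<le> t + 1" "0 \<le> Im (z$j)" "Im (z$j) \<le> 1"
        using mem_unit_box[OF z[unfolded B_def]] by auto
      have "t \<le> norm (z$j)" using h(1) complex_Re_le_cmod[of "z$j"] by linarith
      moreover have "norm (z$j) \<le> 3 * t" using cmod_le[of "z$j"] h t1 by linarith
      ultimately show ?thesis by simp
    qed
    have nz1: "t \<le> norm z" using cj[of undefined] Finite_Cartesian_Product.norm_nth_le[of z undefined] by linarith
    have nz2: "norm z \<le> 3 * n * t"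
    proof -
      have "norm z \<le> (\<Sum>i\<in>UNIV. norm (z$i))" by (rule norm_le_l1_vec)
      also have "\<dots> \<le> (\<Sum>i\<in>(UNIV::'n set). 3 * t)" by (rule sum_mono) (use cj in auto)
      finally show ?thesis unfolding n_def by simp
    qed
    have nzpos: "norm z > 0" using nz1 t1 by linarith
    have m: "t ^ d \<le> norm (monomial J z)"
    proof -
      have "t ^ d = (\<Prod>j\<in>UNIV. t ^ J j)" unfolding d_def by (rule power_sum)
      also have "\<dots> \<le> (\<Prod>j\<in>UNIV. norm (z$j) ^ J j)"
        by (rule prod_mono) (use cj t1 in \<open>auto intro: power_mono\<close>)
      also have "\<dots> = norm (monomial J z)" unfolding monomial_def by (simp add: prod_norm[symmetric] norm_power)
      finally show ?thesis .
    qed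
    have e1: "ennreal (norm z powr (-A)) \<le> eexp (- u z)"
    proof -
      have "u z \<le> ereal (A * ln (norm z))" using bnd[of z] nz1 tR by simp
      then have "- ereal (A * ln (norm z)) \<le> - u z" by (simp only: ereal_minus_le_minus)
      then have "ereal (- (A * ln (norm z))) \<le> - u z" by simp
      then have "eexp (ereal (- (A * ln (norm z)))) \<le> eexp (- u z)" by (rule eexp_mono)
      moreover have "eexp (ereal (- (A * ln (norm z)))) = ennreal (norm z powr (-A))"
        using nzpos by (simp add: eexp_def powr_def)
      ultimately show ?thesis by simp
    qed
    have e2: "C * t powr (-A) \<le> norm z powr (-A)"
    proof -
      have "norm z powr (-A) \<ge> (3 * n * t) powr (-A)"
        by (rule powr_mono2') (use A nzpos nz2 in auto)
      moreover have "(3 * n * t) powr (-A) = C * t powr (-A)"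
        unfolding C_def using n1 t1 by (simp add: powr_mult)
      ultimately show ?thesis by simp
    qed
    have e3: "C * t \<le> t ^ d * (C * t powr (-A))"
    proof -
      have "t powr 1 \<le> t powr (real d + - A)" by (rule powr_mono) (use dA t1 in auto)
      also have "\<dots> = t powr (real d) * t powr (-A)" by (rule powr_add)
      also have "\<dots> = t ^ d * t powr (-A)" using t1 by (simp add: powr_realpow)
      finally have "t \<le> t ^ d * t powr (-A)" using t1 by simp
      then show ?thesis using C0 by (simp add: mult_left_mono mult.left_commute)
    qed
    have "ennreal (C * t) \<le> ennreal (t ^ d * (C * t powr (-A)))" by (rule ennreal_leI[OF e3])
    also have "\<dots> = ennreal (t ^ d) * ennreal (C * t powr (-A))"
      using t1 C0 by (simp add: ennreal_mult)
    also have "\<dots> \<le> ennreal (norm (monomial J z)) * eexp (- u z)"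
    proof (rule mult_mono)
      show "ennreal (t ^ d) \<le> ennreal (norm (monomial J z))" by (rule ennreal_leI[OF m])
      show "ennreal (C * t powr (-A)) \<le> eexp (- u z)" using ennreal_leI[OF e2] e1 by (rule order_trans)
    qed auto
    finally show ?thesis unfolding f_def .
  qed
  have pw2: "ennreal (r + 1) * indicator B z \<le> (f z)^2 * indicator (UNIV - K) z" for z
  proof (cases "z \<in> B")
    case True
    have "z \<notin> K"
    proof
      assume "z \<in> K"
      then have "norm z \<le> M" by (rule M)
      moreover have "t \<le> norm z"
      proof -
        have "t \<le> Re (z$undefined)" using mem_unit_box[OF True[unfolded B_def]] by auto
        also have "\<dots> \<le> norm (z$undefined)" by (rule complex_Re_le_cmod)
        also have "\<dots> \<le> norm z" by (rule Finite_Cartesian_Product.norm_nth_le)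
        finally show ?thesis .
      qed
      ultimately show False using tM by linarith
    qed
    have "ennreal (r + 1) \<le> ennreal ((C * t)^2)"
    proof (rule ennreal_leI)
      have "1 \<le> C * t" using tC r(1) by linarith
      then have "(C * t) * 1 \<le> (C * t) * (C * t)" by (intro mult_left_mono) auto
      then have "C * t \<le> (C * t)^2" by (simp add: power2_eq_square)
      then show "r + 1 \<le> (C * t)^2" using tC by linarith
    qed
    also have "\<dots> = (ennreal (C * t))^2" using C0 t1 by (simp add: ennreal_power)
    also have "\<dots> \<le> (f z)^2" by (rule power_mono[OF pw[OF True]]) simp
    finally show ?thesis using True \<open>z \<notin> K\<close> by simp
  qed simp
  have "ennreal (r + 1) = (\<integral>\<^sup>+ z. ennreal (r + 1) * indicator B z \<partial>lborel)"
    using Bm by (simp add: nn_integral_cmult_indicator B_def emeasure_unit_box)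
  also have "\<dots> \<le> (\<integral>\<^sup>+ z\<in>(UNIV - K). (f z)^2 \<partial>lborel)"
    by (rule nn_integral_mono) (rule pw2)
  also have "\<dots> = ennreal r" by (rule r(2))
  finally show False using r(1) by (simp add: ennreal_le_iff)
qed



lemma log_bound:
  fixes u :: "complex^'n::finite \<Rightarrow> ereal"
  assumes "Limsup at_infinity (\<lambda>z. u z / ereal (ln (norm z))) < \<infinity>"
  obtains A R where "A \<ge> 0" "\<And>z. norm z \<ge> R \<Longrightarrow> u z \<le> ereal (A * ln (norm z))"
proof -
  obtain m :: nat where m: "Limsup at_infinity (\<lambda>z. u z / ereal (ln (norm z))) < ereal (real m)"
    using assms less_PInf_Ex_of_nat by auto
  have "eventually (\<lambda>z. u z / ereal (ln (norm z)) < ereal (real m)) at_infinity"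
    by (rule Limsup_lessD[OF m])
  then obtain b where b: "\<And>z. b \<le> norm z \<Longrightarrow> u z / ereal (ln (norm z)) < ereal (real m)"
    unfolding eventually_at_infinity by blast
  show ?thesis
  proof (rule that[of "real m" "max b 3"])
    fix z :: "complex^'n" assume z: "max b 3 \<le> norm z"
    have l: "ln (norm z) > 0" using z by (intro ln_gt_zero) simp
    have q: "u z / ereal (ln (norm z)) < ereal (real m)" using b z by simp
    show "u z \<le> ereal (real m * ln (norm z))"
    proof (cases "u z")
      case (real r)
      then have "r / ln (norm z) < real m" using q l by (simp add: ereal_divide)
      then have "r < real m * ln (norm z)" using l by (simp add: pos_divide_less_eq)
      then show ?thesis using real by simp
    next
      case PInf
      then show ?thesis using q l by simp
    next
      case MInf
      then show ?thesis by simp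
    qed
  qed simp
qed


theorem proposition8p3:
  fixes u :: "complex^'n::finite \<Rightarrow> ereal"
  assumes "LPSH_star u" and "toric u" and "c_infty u < 1"
  shows "\<exists>F. finite F \<and> (\<forall>J\<in>F. monomial J \<in> P_infty u)
           \<and> (\<forall>P\<in>P_infty u. \<exists>c. \<forall>z. P z = (\<Sum>J\<in>F. c J * monomial J z))"
proof -
  have ps: "psh u" and lim: "Limsup at_infinity (\<lambda>z. u z / ereal (ln (norm z))) < \<infinity>"
    using assms(1) unfolding LPSH_star_def by auto
  have um[measurable]: "u \<in> borel_measurable borel"
    using ps unfolding psh_def by (intro usc_meas) auto
  obtain A R where A: "A \<ge> 0" and bnd: "\<And>z. norm z \<ge> R \<Longrightarrow> u z \<le> ereal (A * ln (norm z))"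
    using log_bound[OF lim] by blast
  define F where "F = {J. monomial J \<in> P_infty u}"
  define D where "D = nat \<lceil>A\<rceil>"
  have FD: "F \<subseteq> PiE UNIV (\<lambda>_. {..D})"
  proof
    fix J assume "J \<in> F"
    then have "L2_infty (\<lambda>z. ennreal (norm (monomial J z)) * eexp (- u z))"
      unfolding F_def P_infty_def by auto
    then have s: "real (\<Sum>j\<in>UNIV. J j) < A + 1" by (intro mono_bound[of A R u J] A bnd)
    have "J i \<le> D" for i
    proof -
      have "J i \<le> (\<Sum>j\<in>UNIV. J j)" by (rule member_le_sum) auto
      then have "real (J i) < A + 1" using s by linarith
      then have "J i < \<lceil>A\<rceil> + 1" by linarith
      then show ?thesis unfolding D_def by linarith
    qed
    then show "J \<in> PiE UNIV (\<lambda>_. {..D})" by (auto simp: PiE_iff)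
  qed
  have finF: "finite F" by (rule finite_subset[OF FD]) (rule finite_PiE, auto)
  show ?thesis
  proof (rule exI[of _ F], intro conjI ballI)
    show "finite F" by (rule finF)
    fix J assume "J \<in> F" then show "monomial J \<in> P_infty u" unfolding F_def by simp
  next
    fix P assume "P \<in> P_infty u"
    then obtain S c where S: "finite S" and Pz: "\<And>z. P z = (\<Sum>J\<in>S. c J * monomial J z)"
      and L2P: "L2_infty (\<lambda>z. ennreal (norm (P z)) * eexp (- u z))"
      unfolding P_infty_def polynomial_fun_def by blast
    have inF: "J \<in> F" if "J \<in> S" "c J \<noteq> 0" for J
    proof -
      have "L2_infty (\<lambda>z. ennreal (norm (monomial J z)) * eexp (- u z))"
        by (rule extract_monomial[OF assms(2) um S Pz L2P that])
      moreover have "polynomial_fun (monomial J)"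
        unfolding polynomial_fun_def by (rule exI[of _ "{J}"], rule exI[of _ "\<lambda>_. 1"]) simp
      ultimately show ?thesis unfolding F_def P_infty_def by simp
    qed
    show "\<exists>c'. \<forall>z. P z = (\<Sum>J\<in>F. c' J * monomial J z)"
    proof (intro exI allI)
      fix z
      have "P z = (\<Sum>J\<in>S. c J * monomial J z)" by (rule Pz)
      also have "\<dots> = (\<Sum>J\<in>F \<inter> S. c J * monomial J z)"
        by (rule sum.mono_neutral_right[OF S]) (auto dest: inF)
      also have "\<dots> = (\<Sum>J\<in>F. (if J \<in> S then c J else 0) * monomial J z)"
        by (simp add: sum.inter_restrict[OF finF]) (rule sum.cong, auto)
      finally show "P z = (\<Sum>J\<in>F. (if J \<in> S then c J else 0) * monomial J z)" .
    qed
  qed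
qed

end
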